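(* Let $\eta$ be as in the construction below. If $\nu\in\mathbb M$ is ergodic with respect to $\mathbb S\times\mathbb O$ and $\theta_0[\nu]=\eta$, then $\nu=\nu^{(\alpha)}[\eta]$ for some $\alpha\in I^{\mathbb N}$. Thus the ergodic measures in $\mathbb M$ with projection $\eta$ are exactly the measures $\nu^{(\alpha)}[\eta]$, $\alpha\in I^{\mathbb N}$.
   Context: $I=\{0,1\}$. $\mathbb S$ is the left shift on $I^{\mathbb Z}$; $\mathbb S^j\eta$ denotes pushforward. $I^{\mathbb N}$ is the space of $0$–$1$ sequences $(\alpha_i)_{i\ge1}$ with uniform Bernoulli measure $m$; $\mathbb O$ is the odometer (if $\alpha_1=\dots=\alpha_{n-1}=1$, $\alpha_n=0$, then $\mathbb O[\alpha]_i=0$ for $i<n$, $\mathbb O[\alpha]_n=1$, $\mathbb O[\alpha]_i=\alpha_i$ for $i>n$). $\mathbb M$ is the set of Borel probability measures on $I^{\mathbb Z}\times I^{\mathbb N}$ invariant under $\mathbb S\times\mathbb O$. $A_{r,k}=\{\alpha:\sum_{i=1}^k\alpha_i2^{i-1}=r\}$; $\theta_k[\nu]$ is the normalized projection to $I^{\mathbb Z}$ of $\nu$ restricted to $I^{\mathbb Z}\times A_{0,k}$. A sequence $(\theta_k)$ of probability measures with $\mathbb S^{2^k}\theta_k=\theta_k$ and $\theta_k=\frac12(\theta_{k+1}+\mathbb S^{2^k}\theta_{k+1})$ for all $k$ determines a unique $\nu\in\mathbb M$ with $\theta_k[\nu]=\theta_k$. Construction: $\eta$ is an $\mathbb S$-invariant,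 $\mathbb S$-ergodic Borel probability measure on $I^{\mathbb Z}$ such that $(I^{\mathbb Z},\eta,\mathbb S)$ has a factor isomorphic to the odometer $(I^{\mathbb N},m,\mathbb O)$. Let $\varrho_n=e^{2\pi i/2^n}$; fix measurable $f_n$ ($n\ge0$) with $f_n\circ\mathbb S=\varrho_nf_n$ $\eta$-a.e., $f_0=1$, $f_n=f_{n+1}^2$ (such a family exists, and $f_n$ takes values in $\{\varrho_n^r:0\le r<2^n\}$ a.e.). Let $B(r,n)=\{w:f_n(w)=\varrho_n^r\}$, $r(n,\alpha)=\sum_{k=0}^{n-1}2^k\alpha_{k+1}$, $\theta_n^{(\alpha)}=2^n\,\eta|_{B(r(n,\alpha),n)}$; $\nu^{(\alpha)}[\eta]$ is the element of $\mathbb M$ with $\theta_n[\nu^{(\alpha)}[\eta]]=\theta_n^{(\alpha)}$ for all $n\ge0$. *)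

theory Defs
  imports "HOL-Probability.Probability"
begin

text \<open>I^Z: bi-infinite 0-1 sequences, product sigma-algebra of discrete factors
  (= Borel sigma-algebra of the Cantor space).\<close>
definition XZ :: "(int \<Rightarrow> bool) measure" where
  "XZ = PiM UNIV (\<lambda>_. count_space UNIV)"

text \<open>I^N: one-sided 0-1 sequences; index i (0-based) stands for alpha_(i+1).\<close>
definition XN :: "(nat \<Rightarrow> bool) measure" where
  "XN = PiM UNIV (\<lambda>_. count_space UNIV)"

definition bern :: "(nat \<Rightarrow> bool) measure" where
  "bern = PiM UNIV (\<lambda>_. measure_pmf (bernoulli_pmf (1/2)))"

definition shiftZ :: "(int \<Rightarrow> bool) \<Rightarrow> (int \<Rightarrow> bool)" where
  "shiftZ w = (\<lambda>i. w (i + 1))"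

text \<open>Odometer O (adding 1 with carry; the all-ones sequence goes to all zeros).\<close>
definition odo :: "(nat \<Rightarrow> bool) \<Rightarrow> (nat \<Rightarrow> bool)" where
  "odo a = (\<lambda>i. if (\<forall>j<i. a j) then \<not> a i else a i)"

definition invariant_meas :: "'a measure \<Rightarrow> ('a \<Rightarrow> 'a) \<Rightarrow> bool" where
  "invariant_meas M T \<longleftrightarrow> T \<in> measurable M M \<and> distr M M T = M"

definition ergodic_meas :: "'a measure \<Rightarrow> ('a \<Rightarrow> 'a) \<Rightarrow> bool" where
  "ergodic_meas M T \<longleftrightarrow> invariant_meas M T \<and>
     (\<forall>A\<in>sets M. T -` A \<inter> space M = A \<longrightarrow> emeasure M A = 0 \<or> emeasure M A = 1)"

definition MM :: "((int \<Rightarrow> bool) \<times> (nat \<Rightarrow> bool)) measure set" where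
  "MM = {\<nu>. sets \<nu> = sets (XZ \<Otimes>\<^sub>M XN) \<and> prob_space \<nu> \<and>
              invariant_meas \<nu> (map_prod shiftZ odo)}"

definition A0 :: "nat \<Rightarrow> (nat \<Rightarrow> bool) set" where
  "A0 k = {a. \<forall>i<k. \<not> a i}"

definition theta :: "nat \<Rightarrow> ((int \<Rightarrow> bool) \<times> (nat \<Rightarrow> bool)) measure \<Rightarrow> (int \<Rightarrow> bool) measure" where
  "theta k \<nu> = distr (uniform_measure \<nu> (UNIV \<times> A0 k)) XZ fst"

definition has_odometer_factor :: "(int \<Rightarrow> bool) measure \<Rightarrow> bool" where
  "has_odometer_factor \<eta> \<longleftrightarrow>
     (\<exists>\<pi>. \<pi> \<in> measurable \<eta> bern \<and> distr \<eta> bern \<pi> = bern \<and>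
          (AE w in \<eta>. \<pi> (shiftZ w) = odo (\<pi> w)))"

definition rho :: "nat \<Rightarrow> complex" where
  "rho n = cis (2 * pi / 2 ^ n)"

definition eigen_family :: "(int \<Rightarrow> bool) measure \<Rightarrow> (nat \<Rightarrow> (int \<Rightarrow> bool) \<Rightarrow> complex) \<Rightarrow> bool" where
  "eigen_family \<eta> f \<longleftrightarrow>
     (\<forall>n. f n \<in> borel_measurable \<eta>) \<and>
     (\<forall>n. AE w in \<eta>. f n (shiftZ w) = rho n * f n w) \<and>
     (AE w in \<eta>. f 0 w = 1) \<and>
     (\<forall>n. AE w in \<eta>. f n w = (f (Suc n) w)\<^sup>2)"

definition Bset :: "(int \<Rightarrow> bool) measure \<Rightarrow> (nat \<Rightarrow> (int \<Rightarrow> bool) \<Rightarrow> complex) \<Rightarrow> nat \<Rightarrow> nat \<Rightarrow> (int \<Rightarrow> bool) set" where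
  "Bset \<eta> f r n = {w \<in> space \<eta>. f n w = rho n ^ r}"

definition rr :: "nat \<Rightarrow> (nat \<Rightarrow> bool) \<Rightarrow> nat" where
  "rr n a = (\<Sum>k<n. 2 ^ k * (if a k then 1 else 0))"

definition theta_alpha :: "(int \<Rightarrow> bool) measure \<Rightarrow> (nat \<Rightarrow> (int \<Rightarrow> bool) \<Rightarrow> complex) \<Rightarrow> (nat \<Rightarrow> bool) \<Rightarrow> nat \<Rightarrow> (int \<Rightarrow> bool) measure" where
  "theta_alpha \<eta> f a n = density \<eta> (\<lambda>w. 2 ^ n * indicator (Bset \<eta> f (rr n a) n) w)"

definition nu_alpha :: "(int \<Rightarrow> bool) measure \<Rightarrow> (nat \<Rightarrow> (int \<Rightarrow> bool) \<Rightarrow> complex) \<Rightarrow> (nat \<Rightarrow> bool) \<Rightarrow> ((int \<Rightarrow> bool) \<times> (nat \<Rightarrow> bool)) measure" where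
  "nu_alpha \<eta> f a = (THE \<nu>. \<nu> \<in> MM \<and> (\<forall>n. theta n \<nu> = theta_alpha \<eta> f a n))"

end

theory Submission
  imports Defs
begin

lemma rr_0[simp]: "rr 0 a = 0" by (simp add: rr_def)
lemma rr_Suc: "rr (Suc n) a = rr n a + 2^n * (if a n then 1 else 0)"
  by (simp add: rr_def)
lemma rr_less: "rr n a < 2^n"
  by (induction n) (auto simp: rr_Suc)
lemma mod_Suc_bit: "x mod 2^(Suc n) = (x::nat) mod 2^n + 2^n * (if bit x n then 1 else 0)"
proof -
  have "x mod (2^n * 2) = 2^n * (x div 2^n mod 2) + x mod 2^n" by (rule mod_mult2_eq)
  moreover have "x div 2^n mod 2 = (if bit x n then 1 else 0)"
    by (simp add: bit_iff_odd odd_iff_mod_2_eq_one even_iff_mod_2_eq_zero)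
  ultimately show ?thesis by (simp add: mult.commute)
qed
lemma rr_all: "rr n a = 2^n - 1 \<longleftrightarrow> (\<forall>j<n. a j)"
proof (induction n)
  case 0 then show ?case by simp
next
  case (Suc n)
  have l: "rr n a < 2^n" by (rule rr_less)
  show ?case
  proof (cases "a n")
    case True
    then show ?thesis using Suc l by (auto simp: rr_Suc less_Suc_eq)
  next
    case False
    have "rr (Suc n) a \<noteq> 2^Suc n - 1" using False l by (simp add: rr_Suc)
    then show ?thesis using False by auto
  qed
qed
lemma rr_odo: "rr n (odo a) = (rr n a + 1) mod 2^n"
proof (induction n)
  case 0 then show ?case by simp
next
  case (Suc n)
  have l: "rr n a < 2^n" by (rule rr_less)
  have o: "odo a n = (if (\<forall>j<n. a j) then \<not> a n else a n)" by (simp add: odo_def)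
  show ?case
  proof (cases "\<forall>j<n. a j")
    case True
    then have e: "rr n a = 2^n - 1" using rr_all by blast
    have p: "(0::nat) < 2^n" by simp
    have "rr n a + 1 = 2^n" using e p by linarith
    have ih: "rr n (odo a) = 0" using Suc \<open>rr n a + 1 = 2^n\<close> by simp
    have q: "((2::nat) ^ n + 2 ^ n) mod (2 * 2 ^ n) = 0" by (metis mult_2 mod_self)
    have "rr (Suc n) (odo a) = 2^n * (if a n then 0 else 1)"
      using ih True by (simp add: rr_Suc o)
    moreover have "(rr (Suc n) a + 1) mod 2^Suc n = 2^n * (if a n then 0 else 1)"
    proof -
      have "rr (Suc n) a + 1 = 2^n + 2^n * (if a n then 1 else 0)"
        using \<open>rr n a + 1 = 2^n\<close> by (simp add: rr_Suc)
      then show ?thesis using q by (cases "a n") auto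
    qed
    ultimately show ?thesis by simp
  next
    case False
    then have e: "rr n a + 1 < 2^n" using rr_all l by (metis Suc_eq_plus1 Suc_lessI add_diff_cancel_right' )
    have "rr n a + 2 ^ n * (if a n then 1 else 0) + 1 < 2^Suc n" using e by auto
    then show ?thesis using False Suc e
      by (auto simp: rr_Suc o)
  qed
qed
lemma rr_odo_pow: "rr n ((odo^^k) a) = (rr n a + k) mod 2^n"
proof (induction k)
  case 0 then show ?case using rr_less by simp
next
  case (Suc k)
  have "rr n ((odo^^Suc k) a) = ((rr n a + k) mod 2^n + 1) mod 2^n"
    using Suc by (simp add: rr_odo)
  also have "\<dots> = (rr n a + Suc k) mod 2^n"
    by (metis Suc_eq_plus1 add_Suc_right mod_Suc_eq)
  finally show ?case .
qed
lemma rr_mod: "m \<le> n \<Longrightarrow> rr m a = rr n a mod 2^m"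
proof (induction n)
  case 0 then show ?case by simp
next
  case (Suc n)
  show ?case
  proof (cases "m = Suc n")
    case True then show ?thesis by (metis mod_less rr_less)
  next
    case False
    then have mn: "m \<le> n" using Suc by simp
    then have 1: "rr m a = rr n a mod 2^m" using Suc by simp
    have 2: "(2::nat)^n * (if a n then 1 else 0) = 2^m * (2^(n-m) * (if a n then 1 else 0))"
      using mn by (simp add: power_add[symmetric])
    show ?thesis unfolding rr_Suc 2 using 1 by simp
  qed
qed
lemma A0_rr: "A0 n = {a. rr n a = 0}"
  by (auto simp: A0_def rr_def)
lemma rr_bit: "2^i \<le> rr (Suc i) a \<longleftrightarrow> a i"
  using rr_less[of i a] by (auto simp: rr_Suc)

lemma rho_pow: "rho n ^ j = cis (2 * pi * real j / 2^n)"
proof -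
  have "rho n ^ j = cis (real j * (2*pi/2^n))" unfolding rho_def by (rule Complex.DeMoivre)
  then show ?thesis by (simp add: field_simps)
qed
lemma rho_nz[simp]: "rho n \<noteq> 0" by (simp add: rho_def)
lemma rho_pow_2n: "rho n ^ (2^n) = 1"
  by (simp add: rho_pow)
lemma rho_pow_mod: "rho n ^ j = rho n ^ (j mod 2^n)"
proof -
  have "j = 2^n * (j div 2^n) + j mod 2^n" by simp
  then have "rho n ^ j = (rho n ^ (2^n)) ^ (j div 2^n) * rho n ^ (j mod 2^n)"
    by (metis power_add power_mult)
  then show ?thesis by (simp add: rho_pow_2n)
qed
lemma rho_pow_one: assumes "rho n ^ d = 1" "d < 2^n" shows "d = 0"
proof (rule ccontr)
  assume "d \<noteq> 0"
  have "cos (2 * pi * real d / 2^n) = 1" using assms(1) unfolding rho_pow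
    by (metis cis.simps(1) one_complex.simps(1))
  then obtain k :: int where k: "2 * pi * real d / 2^n = real_of_int k * 2 * pi"
    using cos_one_2pi_int by blast
  then have "real d / 2^n = real_of_int k" by (simp add: field_simps)
  then have "real d = real_of_int k * 2^n" by (simp add: field_simps)
  moreover have "0 < real d" "real d < 2^n" using \<open>d \<noteq> 0\<close> assms(2)
    by auto
  moreover have p: "(0::real) < 2^n" by simp
  ultimately have "real_of_int k * 2^n > 0" "real_of_int k * 2^n < 1 * 2^n" by auto
  then have "0 < real_of_int k" "real_of_int k < 1"
    using p zero_less_mult_iff mult_less_cancel_right_pos by (auto simp: zero_less_mult_iff)
  then have "0 < k" "k < 1" by auto
  then show False by simp
qed
lemma rho_pow_eq: "rho n ^ i = rho n ^ j \<longleftrightarrow> i mod 2^n = j mod 2^n"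
proof
  assume "i mod 2^n = j mod 2^n" then show "rho n ^ i = rho n ^ j"
    by (metis rho_pow_mod)
next
  assume e: "rho n ^ i = rho n ^ j"
  define a where "a = i mod 2^n"
  define b where "b = j mod 2^n"
  have ab: "a < 2^n" "b < 2^n" by (simp_all add: a_def b_def)
  have e2: "rho n ^ a = rho n ^ b" using e rho_pow_mod a_def b_def by metis
  show "i mod 2^n = j mod 2^n"
  proof (cases "a \<le> b")
    case True
    then have "rho n ^ b = rho n ^ a * rho n ^ (b - a)" by (metis le_add_diff_inverse power_add)
    then have "rho n ^ (b - a) = 1" using e2 by simp
    then have "b - a = 0" using rho_pow_one ab by (meson diff_le_self le_less_trans)
    then show ?thesis using True a_def b_def by simp
  next
    case False
    then have "rho n ^ a = rho n ^ b * rho n ^ (a - b)" by (metis le_add_diff_inverse power_add nat_le_linear)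
    then have "rho n ^ (a - b) = 1" using e2 by simp
    then have "a - b = 0" using rho_pow_one ab by (meson diff_le_self le_less_trans)
    then show ?thesis using False a_def b_def by simp
  qed
qed
lemma rho_Suc_sq: "rho (Suc n) ^ (2 * j) = rho n ^ j"
  by (simp add: rho_pow field_simps)
lemma rho_half: "rho (Suc n) ^ (2^n) = -1"
  by (simp add: rho_pow cis_pi)
lemma chain_vals:
  fixes g :: "nat \<Rightarrow> complex"
  assumes "g 0 = 1" "\<forall>n. g n = (g (Suc n))^2"
  shows "\<exists>j. g n = rho n ^ j"
proof (induction n)
  case 0 then show ?case using assms(1) by (intro exI[of _ 0]) simp
next
  case (Suc n)
  then obtain j where j: "g n = rho n ^ j" by blast
  have "(g (Suc n))^2 = (rho (Suc n) ^ j)^2"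
    using assms(2) j rho_Suc_sq by (metis power_mult power_mult_distrib mult.commute power2_eq_square power_even_eq)
  then have "g (Suc n) = rho (Suc n) ^ j \<or> g (Suc n) = - (rho (Suc n) ^ j)"
    using power2_eq_iff by blast
  then show ?case
  proof
    assume "g (Suc n) = - (rho (Suc n) ^ j)"
    then have "g (Suc n) = rho (Suc n) ^ (j + 2^n)" by (simp add: power_add rho_half)
    then show ?thesis by blast
  qed blast
qed

lemma space_XZ[simp]: "space XZ = UNIV" by (simp add: XZ_def space_PiM)
lemma space_XN[simp]: "space XN = UNIV" by (simp add: XN_def space_PiM)
definition shk :: "int \<Rightarrow> (int \<Rightarrow> bool) \<Rightarrow> (int \<Rightarrow> bool)" where
  "shk k w = (\<lambda>i. w (i + k))"
lemma shk_meas[measurable]: "shk k \<in> measurable XZ XZ"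
  unfolding shk_def XZ_def
  by (rule measurable_PiM_single') (auto intro!: measurable_component_singleton simp: space_PiM)
lemma shiftZ_meas[measurable]: "shiftZ \<in> measurable XZ XZ"
  unfolding shiftZ_def XZ_def
  by (rule measurable_PiM_single') (auto intro!: measurable_component_singleton simp: space_PiM)
lemma rr_meas[measurable]: "rr n \<in> measurable XN (count_space UNIV)"
  unfolding XN_def rr_def by measurable
lemma cyl_sets[measurable]: "{a. rr n a = r} \<in> sets XN"
proof -
  have "rr n -` {r} \<inter> space XN \<in> sets XN" by (rule measurable_sets[OF rr_meas]) simp
  then show ?thesis by (simp add: vimage_def)
qed

abbreviation TT where "TT \<equiv> map_prod shiftZ odo"
abbreviation CC where "CC n r \<equiv> {a. rr n a = r}"
lemma MM_D: assumes "\<mu> \<in> MM"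
  shows "sets \<mu> = sets (XZ \<Otimes>\<^sub>M XN)" "space \<mu> = UNIV" "prob_space \<mu>"
    "TT \<in> measurable \<mu> \<mu>" "distr \<mu> \<mu> TT = \<mu>"
proof -
  show s: "sets \<mu> = sets (XZ \<Otimes>\<^sub>M XN)" using assms by (simp add: MM_def)
  show "space \<mu> = UNIV" using sets_eq_imp_space_eq[OF s] by (simp add: space_pair_measure)
  show "prob_space \<mu>" "TT \<in> measurable \<mu> \<mu>" "distr \<mu> \<mu> TT = \<mu>"
    using assms by (simp_all add: MM_def invariant_meas_def)
qed
lemma UNIV_XZ[simp]: "UNIV \<in> sets XZ" by (metis sets.top space_XZ)
lemma UNIV_XN[simp]: "UNIV \<in> sets XN" by (metis sets.top space_XN)
lemma TT_pow: "(TT ^^ k) = map_prod (shiftZ^^k) (odo^^k)"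
  by (induction k) (auto simp: fun_eq_iff)
lemma shiftZ_pow_meas[measurable]: "(shiftZ^^k) \<in> measurable XZ XZ"
  by (induction k) (auto intro: measurable_comp[OF _ shiftZ_meas] simp: funpow_Suc_right)
lemma TT_pow_meas: assumes "\<mu> \<in> MM" shows "(TT^^k) \<in> measurable \<mu> \<mu>"
proof (induction k)
  case 0 then show ?case by simp
next
  case (Suc k) then show ?case using measurable_comp[OF Suc.IH MM_D(4)[OF assms]] by (simp add: comp_def)
qed
lemma MM_inv: assumes "\<mu> \<in> MM" "X \<in> sets \<mu>" shows "emeasure \<mu> (TT -` X) = emeasure \<mu> X"
proof -
  have "emeasure \<mu> X = emeasure (distr \<mu> \<mu> TT) X" using MM_D(5)[OF assms(1)] by simp
  also have "\<dots> = emeasure \<mu> (TT -` X \<inter> space \<mu>)"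
    by (rule emeasure_distr[OF MM_D(4)[OF assms(1)] assms(2)])
  finally show ?thesis using MM_D(2)[OF assms(1)] by simp
qed
lemma MM_inv_pow: assumes "\<mu> \<in> MM" shows "X \<in> sets \<mu> \<Longrightarrow> emeasure \<mu> ((TT^^k) -` X) = emeasure \<mu> X"
proof (induction k arbitrary: X)
  case 0 then show ?case by simp
next
  case (Suc k)
  have m: "TT -` X \<in> sets \<mu>"
    using measurable_sets[OF MM_D(4)[OF assms(1)] Suc.prems] MM_D(2)[OF assms(1)] by simp
  have e: "(TT^^Suc k) -` X = (TT^^k) -` (TT -` X)" by (simp add: vimage_comp)
  show ?case using MM_inv[OF assms(1) Suc.prems] Suc.IH[OF m] e by metis
qed
lemma mod_eq_r: assumes "x < m" "r < (m::nat)" shows "(x + r) mod m = r \<longleftrightarrow> x = 0"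
proof (cases "x + r < m")
  case True then show ?thesis by simp
next
  case False
  then have "(x + r) mod m = x + r - m" using assms by (simp add: le_mod_geq)
  then show ?thesis using assms False by auto
qed
lemma odo_pow_cyl: assumes "r < 2^n" shows "(odo^^r) -` CC n r = CC n 0"
  using mod_eq_r[OF rr_less assms] by (auto simp: rr_odo_pow)
lemma rect_sets: assumes "\<mu> \<in> MM" "E \<in> sets XZ" "F \<in> sets XN" shows "E \<times> F \<in> sets \<mu>"
  using MM_D(1)[OF assms(1)] assms(2,3) by (simp add: pair_measureI)
lemma MM_cyl_shift: assumes "\<mu> \<in> MM" "E \<in> sets XZ" "r < 2^n"
  shows "emeasure \<mu> (E \<times> CC n r) = emeasure \<mu> (((shiftZ^^r) -` E) \<times> CC n 0)"
proof -
  have "(TT^^r) -` (E \<times> CC n r) = ((shiftZ^^r) -` E) \<times> ((odo^^r) -` CC n r)"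
    unfolding TT_pow by auto
  then show ?thesis using MM_inv_pow[OF assms(1) rect_sets[OF assms(1,2) cyl_sets[of n r]], of r]
    odo_pow_cyl[OF assms(3)] by simp
qed
lemma MM_cyl_val: assumes "\<mu> \<in> MM" shows "emeasure \<mu> (UNIV \<times> CC n 0) = ennreal (1/2^n)"
proof -
  interpret prob_space \<mu> using MM_D(3)[OF assms] .
  have eq: "emeasure \<mu> (UNIV \<times> CC n r) = emeasure \<mu> (UNIV \<times> CC n 0)" if "r < 2^n" for r
    using MM_cyl_shift[OF assms _ that, of UNIV] sets.top[of XZ, unfolded space_XZ] by simp
  have "(\<Sum>r\<in>{..<2^n}. emeasure \<mu> (UNIV \<times> CC n r)) = emeasure \<mu> (\<Union>r\<in>{..<2^n}. UNIV \<times> CC n r)"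
    by (rule sum_emeasure) (auto simp: disjoint_family_on_def intro!: rect_sets[OF assms])
  also have "(\<Union>r\<in>{..<2^n}. UNIV \<times> CC n r) = space \<mu>"
    using MM_D(2)[OF assms] rr_less by auto
  finally have s1: "(\<Sum>r\<in>{..<2^n}. emeasure \<mu> (UNIV \<times> CC n r)) = 1"
    by (simp only: emeasure_space_1)
  have "(\<Sum>r\<in>{..<2^n}. emeasure \<mu> (UNIV \<times> CC n r)) = (\<Sum>r\<in>{..<(2::nat)^n}. emeasure \<mu> (UNIV \<times> CC n 0))"
    by (rule sum.cong) (auto intro: eq)
  also have "\<dots> = of_nat (2^n) * emeasure \<mu> (UNIV \<times> CC n 0)" by simp
  finally have "of_nat (2^n) * emeasure \<mu> (UNIV \<times> CC n 0) = 1" using s1 by simp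
  then have "ennreal (2^n * measure \<mu> (UNIV \<times> CC n 0)) = 1"
    by (simp add: emeasure_eq_measure ennreal_mult ennreal_of_nat_eq_real_of_nat)
  then have "2^n * measure \<mu> (UNIV \<times> CC n 0) = 1"
    by (simp add: ennreal_eq_1)
  then have "measure \<mu> (UNIV \<times> CC n 0) = 1/2^n" by (simp add: field_simps)
  then show ?thesis by (simp add: emeasure_eq_measure)
qed

lemma PiE_UNIV_UNIV: "(\<Pi>\<^sub>E i\<in>UNIV. UNIV) = UNIV" by auto
lemma sets_XN_gen: "sets XN = sigma_sets UNIV {{f. f i \<in> A} | i A. A \<subseteq> UNIV}"
  unfolding XN_def sets_PiM_single by (simp add: PiE_UNIV_UNIV)

lemma theta_emeasure: assumes "\<mu> \<in> MM" "E \<in> sets XZ"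
  shows "emeasure (theta n \<mu>) E = emeasure \<mu> (E \<times> CC n 0) * ennreal (2^n)"
proof -
  interpret prob_space \<mu> using MM_D(3)[OF assms(1)] .
  let ?U = "uniform_measure \<mu> (UNIV \<times> A0 n)"
  have U: "UNIV \<times> A0 n \<in> sets \<mu>" unfolding A0_rr by (rule rect_sets[OF assms(1)]) auto
  have fm: "fst \<in> measurable ?U XZ"
    using MM_D(1)[OF assms(1)] by (simp add: measurable_fst cong: measurable_cong_sets)
  have "emeasure (theta n \<mu>) E = emeasure ?U (fst -` E \<inter> space ?U)"
    unfolding theta_def by (rule emeasure_distr[OF fm assms(2)])
  also have "fst -` E \<inter> space ?U = E \<times> UNIV" using MM_D(2)[OF assms(1)] by auto
  also have "emeasure ?U (E \<times> UNIV) = emeasure \<mu> ((UNIV \<times> A0 n) \<inter> (E \<times> UNIV)) / emeasure \<mu> (UNIV \<times> A0 n)"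
    by (rule emeasure_uniform_measure[OF U rect_sets[OF assms(1,2)]]) simp
  also have "(UNIV \<times> A0 n) \<inter> (E \<times> UNIV) = E \<times> CC n 0" by (auto simp: A0_rr)
  also have "emeasure \<mu> (UNIV \<times> A0 n) = ennreal (1/2^n)" using MM_cyl_val[OF assms(1)] by (simp add: A0_rr)
  finally show ?thesis by (simp add: divide_ennreal_def inverse_ennreal)
qed

lemma theta_emeasure2: assumes "\<mu> \<in> MM" "E \<in> sets XZ"
  shows "emeasure \<mu> (E \<times> CC n 0) = emeasure (theta n \<mu>) E * ennreal (1/2^n)"
proof -
  have "ennreal (2^n) * ennreal (1/2^n) = 1" by (simp flip: ennreal_mult)
  then show ?thesis unfolding theta_emeasure[OF assms] by (simp add: mult.assoc)
qed

definition Gen :: "((int \<Rightarrow> bool) \<times> (nat \<Rightarrow> bool)) set set" where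
  "Gen = {E \<times> CC n r | E n r. E \<in> sets XZ \<and> r < 2^n}"

lemma Gen_sub: assumes "\<mu> \<in> MM" shows "Gen \<subseteq> sets \<mu>"
  unfolding Gen_def using rect_sets[OF assms] by auto

lemma UNIV_Gen: "E \<in> sets XZ \<Longrightarrow> E \<times> UNIV \<in> Gen"
  unfolding Gen_def by (rule CollectI, rule exI[of _ E], rule exI[of _ 0], rule exI[of _ 0]) simp

lemma empty_Gen: "{} \<in> Gen"
  using UNIV_Gen[of "{}"] by simp

lemma cyl_int: assumes "n \<le> n'"
  shows "CC n r \<inter> CC n' r' = (if r' mod 2^n = r then CC n' r' else {})"
  using rr_mod[OF assms] by auto

lemma Gen_Int_stable: "Int_stable Gen"
proof (rule Int_stableI)
  fix a b assume "a \<in> Gen" "b \<in> Gen"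
  then obtain E n r E' n' r' where a: "a = E \<times> CC n r" "E \<in> sets XZ" "r < 2^n"
    and b: "b = E' \<times> CC n' r'" "E' \<in> sets XZ" "r' < 2^n'" unfolding Gen_def by blast
  have ab: "a \<inter> b = (E \<inter> E') \<times> (CC n r \<inter> CC n' r')" using a b by auto
  have EE: "E \<inter> E' \<in> sets XZ" using a b by auto
  show "a \<inter> b \<in> Gen"
  proof (cases "n \<le> n'")
    case True
    show ?thesis unfolding ab cyl_int[OF True] using EE b empty_Gen
      by (auto simp: Gen_def)
  next
    case False
    then have "n' \<le> n" by simp
    have "CC n r \<inter> CC n' r' = CC n' r' \<inter> CC n r" by auto
    then show ?thesis unfolding ab using cyl_int[OF \<open>n' \<le> n\<close>] EE a empty_Gen
      by (auto simp: Gen_def)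
  qed
qed

lemma bit_set_eq: "{f. f i \<in> A} = (\<Union>r. if r < 2^Suc i \<and> (2^i \<le> r) \<in> A then CC (Suc i) r else {})"
  using rr_bit[of i] rr_less[of "Suc i"] by auto

lemma rect_in_gen: assumes "a \<in> sets XZ" "b \<in> sets XN" shows "a \<times> b \<in> sigma_sets UNIV Gen"
proof -
  interpret S: sigma_algebra UNIV "sigma_sets UNIV Gen"
    by (rule sigma_algebra_sigma_sets) simp
  have "b \<in> sigma_sets UNIV {{f. f i \<in> A} | i A. A \<subseteq> UNIV}" using assms(2) sets_XN_gen by simp
  then show ?thesis
  proof (induction rule: sigma_sets.induct)
    case (Basic b)
    then obtain i A where b: "b = {f. f i \<in> A}" by blast
    have "a \<times> b = (\<Union>r. if r < 2^Suc i \<and> (2^i \<le> r) \<in> A then a \<times> CC (Suc i) r else {})"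
      unfolding b bit_set_eq by auto
    also have "\<dots> \<in> sigma_sets UNIV Gen"
    proof (rule S.countable_UN')
      show "range (\<lambda>r. if r < 2^Suc i \<and> (2^i \<le> r) \<in> A then a \<times> CC (Suc i) r else {}) \<subseteq> sigma_sets UNIV Gen"
      proof -
        have "a \<times> CC (Suc i) r \<in> Gen" if "r < 2^Suc i" for r
          using assms(1) that unfolding Gen_def by blast
        then show ?thesis by (auto intro: sigma_sets.Basic sigma_sets.Empty)
      qed
    qed simp
    finally show ?case .
  next
    case Empty then show ?case by simp
  next
    case (Compl b)
    have "a \<times> (UNIV - b) = (a \<times> UNIV) - (a \<times> b)" by auto
    moreover have "a \<times> UNIV \<in> sigma_sets UNIV Gen" using UNIV_Gen[OF assms(1)] by (rule sigma_sets.Basic)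
    ultimately show ?case using Compl S.Diff by simp
  next
    case (Union B)
    have "a \<times> (\<Union>i. B i) = (\<Union>i. a \<times> B i)" by auto
    then show ?case using Union S.countable_UN' by auto
  qed
qed

lemma sets_prod_gen: "sets (XZ \<Otimes>\<^sub>M XN) = sigma_sets UNIV Gen"
proof
  show "sigma_sets UNIV Gen \<subseteq> sets (XZ \<Otimes>\<^sub>M XN)"
  proof -
    have sa: "sigma_algebra UNIV (sets (XZ \<Otimes>\<^sub>M XN))"
      using sets.sigma_algebra_axioms[of "XZ \<Otimes>\<^sub>M XN"] by (simp add: space_pair_measure)
    show ?thesis
      by (rule sigma_algebra.sigma_sets_subset[OF sa]) (auto simp: Gen_def pair_measureI)
  qed
next
  show "sets (XZ \<Otimes>\<^sub>M XN) \<subseteq> sigma_sets UNIV Gen"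
    unfolding sets_pair_measure space_XZ space_XN UNIV_Times_UNIV
    by (rule sigma_algebra.sigma_sets_subset[OF sigma_algebra_sigma_sets]) (auto intro: rect_in_gen)
qed

lemma MM_unique: assumes "\<mu>1 \<in> MM" "\<mu>2 \<in> MM" "\<forall>n. theta n \<mu>1 = theta n \<mu>2"
  shows "\<mu>1 = \<mu>2"
proof (rule measure_eqI_generator_eq[OF Gen_Int_stable _ _ _ _ , of UNIV _ _ "\<lambda>_. UNIV \<times> UNIV"])
  show "Gen \<subseteq> Pow UNIV" by simp
  show "sets \<mu>1 = sigma_sets UNIV Gen" using MM_D(1)[OF assms(1)] sets_prod_gen by simp
  show "sets \<mu>2 = sigma_sets UNIV Gen" using MM_D(1)[OF assms(2)] sets_prod_gen by simp
  show "range (\<lambda>_. UNIV \<times> UNIV) \<subseteq> Gen" using UNIV_Gen[of UNIV] by simp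
  show "(\<Union>i. UNIV \<times> UNIV) = UNIV" by simp
  show "emeasure \<mu>1 (UNIV \<times> UNIV) \<noteq> \<infinity>" for i::nat
    using prob_space.emeasure_space_1[OF MM_D(3)[OF assms(1)]] MM_D(2)[OF assms(1)] by simp
  fix X assume "X \<in> Gen"
  then obtain E n r where X: "X = E \<times> CC n r" "E \<in> sets XZ" "r < 2^n" unfolding Gen_def by blast
  have E': "(shiftZ^^r) -` E \<in> sets XZ"
    using measurable_sets[OF shiftZ_pow_meas X(2), of r] by simp
  show "emeasure \<mu>1 X = emeasure \<mu>2 X"
    unfolding X(1) MM_cyl_shift[OF assms(1) X(2,3)] MM_cyl_shift[OF assms(2) X(2,3)]
      theta_emeasure2[OF assms(1) E'] theta_emeasure2[OF assms(2) E'] using assms(3) by simp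
qed

locale setting =
  fixes \<eta> :: "(int \<Rightarrow> bool) measure" and f :: "nat \<Rightarrow> (int \<Rightarrow> bool) \<Rightarrow> complex"
    and \<nu> :: "((int \<Rightarrow> bool) \<times> (nat \<Rightarrow> bool)) measure"
  assumes eta_prob: "prob_space \<eta>" and eta_sets: "sets \<eta> = sets XZ"
    and eta_erg: "ergodic_meas \<eta> shiftZ" and eigen: "eigen_family \<eta> f"
    and nuMM: "\<nu> \<in> MM" and nu_erg: "ergodic_meas \<nu> TT" and th0: "theta 0 \<nu> = \<eta>"
begin
lemma pred_eq_complex[measurable]:
  fixes F H :: "_ \<Rightarrow> complex"
  shows "F \<in> borel_measurable M \<Longrightarrow> H \<in> borel_measurable M \<Longrightarrow> Measurable.pred M (\<lambda>x. F x = H x)"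
  unfolding pred_def by (rule measurable_equality_set)
lemma rr_snd_meas[measurable]: "(\<lambda>x. g (rr n (snd x)) :: complex) \<in> borel_measurable (XZ \<Otimes>\<^sub>M XN)"
proof -
  have "(\<lambda>x. rr n (snd x)) \<in> measurable (XZ \<Otimes>\<^sub>M XN) (count_space UNIV)" by measurable
  then show ?thesis by (rule measurable_compose) simp
qed
lemma space_eta[simp]: "space \<eta> = UNIV"
  using sets_eq_imp_space_eq[OF eta_sets] by simp
lemma fmeas[measurable]: "f n \<in> borel_measurable XZ"
  using eigen eta_sets unfolding eigen_family_def by (simp cong: measurable_cong_sets)

definition P where "P w \<longleftrightarrow> f 0 w = 1 \<and> (\<forall>n. f n (shiftZ w) = rho n * f n w) \<and> (\<forall>n. f n w = (f (Suc n) w)^2)"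
lemma P_sets[measurable]: "{w. P w} \<in> sets XZ"
proof -
  have "{w \<in> space XZ. P w} \<in> sets XZ" unfolding P_def by measurable
  then show ?thesis by simp
qed
definition G where "G = {w. \<forall>k::int. P (shk k w)}"
lemma G_sets[measurable]: "G \<in> sets XZ"
proof -
  have "{w \<in> space XZ. \<forall>k::int. shk k w \<in> {w. P w}} \<in> sets XZ" by measurable
  then show ?thesis by (simp add: G_def)
qed
definition As where "As n s = {x. fst x \<in> G \<and> f n (fst x) = rho n ^ (s + rr n (snd x))}"
lemma As_sets: "As n s \<in> sets (XZ \<Otimes>\<^sub>M XN)"
proof -
  have "{x \<in> space (XZ \<Otimes>\<^sub>M XN). fst x \<in> G \<and> f n (fst x) = rho n ^ ((\<lambda>k. s + k) (rr n (snd x)))} \<in> sets (XZ \<Otimes>\<^sub>M XN)"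
    by measurable
  then show ?thesis by (simp add: As_def space_pair_measure)
qed

lemma eta_inv: assumes "A \<in> sets XZ" shows "emeasure \<eta> (shiftZ -` A) = emeasure \<eta> A"
proof -
  have i: "shiftZ \<in> measurable \<eta> \<eta>" "distr \<eta> \<eta> shiftZ = \<eta>"
    using eta_erg by (auto simp: ergodic_meas_def invariant_meas_def)
  have A: "A \<in> sets \<eta>" using assms eta_sets by simp
  have "emeasure \<eta> A = emeasure (distr \<eta> \<eta> shiftZ) A" using i by simp
  also have "\<dots> = emeasure \<eta> (shiftZ -` A \<inter> space \<eta>)" by (rule emeasure_distr[OF i(1) A])
  finally show ?thesis by simp
qed
lemma shk_shk: "shk a (shk b w) = shk (a + b) w"
  by (simp add: shk_def add.assoc)
lemma shk_0[simp]: "shk 0 w = w" by (simp add: shk_def)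
lemma shk_nat: "shk (int m) = shiftZ^^m"
proof (induction m)
  case 0 then show ?case by (simp add: fun_eq_iff)
next
  case (Suc m)
  have s1: "shk 1 = shiftZ" by (simp add: fun_eq_iff shk_def shiftZ_def)
  have "shk (int (Suc m)) w = shk 1 (shk (int m) w)" for w by (simp add: shk_shk add.commute)
  then show ?case using Suc s1 by (simp add: fun_eq_iff)
qed
lemma eta_inv_pow: "A \<in> sets XZ \<Longrightarrow> emeasure \<eta> ((shiftZ^^m) -` A) = emeasure \<eta> A"
proof (induction m arbitrary: A)
  case 0 then show ?case by simp
next
  case (Suc m)
  have m: "shiftZ -` A \<in> sets XZ" using measurable_sets[OF shiftZ_meas Suc.prems] by simp
  have e: "(shiftZ^^Suc m) -` A = (shiftZ^^m) -` (shiftZ -` A)" by (simp add: vimage_comp)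
  have "emeasure \<eta> ((shiftZ^^Suc m) -` A) = emeasure \<eta> ((shiftZ^^m) -` (shiftZ -` A))" by (simp only: e)
  also have "\<dots> = emeasure \<eta> (shiftZ -` A)" by (rule Suc.IH[OF m])
  also have "\<dots> = emeasure \<eta> A" by (rule eta_inv[OF Suc.prems])
  finally show ?case .
qed
lemma eta_inv_shk: assumes "A \<in> sets XZ" shows "emeasure \<eta> (shk k -` A) = emeasure \<eta> A"
proof (cases "k \<ge> 0")
  case True
  define m where "m = nat k"
  have "k = int m" using True m_def by simp
  then have "shk k = shiftZ^^m" using shk_nat by simp
  then show ?thesis using eta_inv_pow[OF assms, of m] by (simp only:)
next
  case False
  define m where "m = nat (- k)"
  have k: "k = - int m" using False m_def by simp
  have B: "shk k -` A \<in> sets XZ" using measurable_sets[OF shk_meas assms] by simp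
  have "shk (int m) -` (shk k -` A) = A" using k by (auto simp: shk_shk)
  then have "(shiftZ^^m) -` (shk k -` A) = A" by (simp only: shk_nat)
  then show ?thesis using eta_inv_pow[OF B, of m] by (simp only:)
qed
lemma AE_P: "AE w in \<eta>. P w"
proof -
  have e1: "\<forall>n. AE w in \<eta>. f n (shiftZ w) = rho n * f n w"
    and e2: "\<forall>n. AE w in \<eta>. f n w = (f (Suc n) w)^2"
    and a3: "AE w in \<eta>. f 0 w = 1"
    using eigen unfolding eigen_family_def by blast+
  have a1: "AE w in \<eta>. \<forall>n. f n (shiftZ w) = rho n * f n w"
    by (rule AE_all_countable[THEN iffD2, OF e1])
  have a2: "AE w in \<eta>. \<forall>n. f n w = (f (Suc n) w)^2"
    by (rule AE_all_countable[THEN iffD2, OF e2])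
  show ?thesis unfolding P_def AE_conj_iff using a1 a2 a3 by blast
qed
lemma AE_G: "AE w in \<eta>. w \<in> G"
proof -
  have D: "UNIV - {w. P w} \<in> sets XZ" by (rule sets.Diff[OF UNIV_XZ P_sets])
  have N: "UNIV - {w. P w} \<in> sets \<eta>" using D eta_sets by simp
  have se: "{x \<in> space \<eta>. \<not> P x} = UNIV - {w. P w}" by auto
  have N0: "emeasure \<eta> (UNIV - {w. P w}) = 0"
    using AE_P AE_iff_measurable[OF N se] by simp
  have "AE w in \<eta>. P (shk k w)" for k
  proof -
    have N': "shk k -` (UNIV - {w. P w}) \<in> sets \<eta>"
      using measurable_sets[OF shk_meas D, of k] eta_sets by simp
    have "emeasure \<eta> (shk k -` (UNIV - {w. P w})) = 0"
      using eta_inv_shk[OF D, of k] N0 by simp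
    moreover have "{x \<in> space \<eta>. \<not> P (shk k x)} = shk k -` (UNIV - {w. P w})" by auto
    ultimately show ?thesis using AE_iff_measurable[OF N'] by simp
  qed
  then have "AE w in \<eta>. \<forall>k. P (shk k w)" by (simp add: AE_all_countable)
  then show ?thesis by (simp add: G_def)
qed
lemma G_shift: "shiftZ w \<in> G \<longleftrightarrow> w \<in> G"
proof -
  have e: "shk k (shiftZ w) = shk (k + 1) w" for k by (simp add: shk_def shiftZ_def algebra_simps)
  have "shiftZ w \<in> G \<longleftrightarrow> (\<forall>k. P (shk (k+1) w))" by (simp add: G_def e)
  also have "\<dots> \<longleftrightarrow> (\<forall>k. P (shk k w))"
  proof
    assume a: "\<forall>k. P (shk (k+1) w)"
    show "\<forall>k. P (shk k w)"
    proof
      fix k :: int show "P (shk k w)" using a[rule_format, of "k - 1"] by simp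
    qed
  next
    assume a: "\<forall>k. P (shk k w)"
    show "\<forall>k. P (shk (k+1) w)"
    proof
      fix k :: int show "P (shk (k+1) w)" using a by blast
    qed
  qed
  finally show ?thesis by (simp add: G_def)
qed
lemma G_P: "w \<in> G \<Longrightarrow> P w"
proof -
  assume "w \<in> G"
  then have "P (shk 0 w)" unfolding G_def by blast
  then show "P w" by simp
qed
lemma marg: assumes "E \<in> sets XZ" shows "emeasure \<nu> (E \<times> UNIV) = emeasure \<eta> E"
proof -
  have a: "emeasure (theta 0 \<nu>) E = emeasure \<nu> (E \<times> CC 0 0) * ennreal (2^0)"
    by (rule theta_emeasure[OF nuMM assms])
  have b: "CC 0 0 = UNIV" by simp
  show ?thesis using a unfolding b th0 by simp
qed
lemma AE_nu_G: "AE x in \<nu>. fst x \<in> G"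
proof -
  have D: "UNIV - G \<in> sets XZ" by (rule sets.Diff[OF UNIV_XZ G_sets])
  have N: "(UNIV - G) \<times> UNIV \<in> sets \<nu>" by (rule rect_sets[OF nuMM D UNIV_XN])
  have "emeasure \<nu> ((UNIV - G) \<times> UNIV) = emeasure \<eta> (UNIV - G)" by (rule marg[OF D])
  also have "\<dots> = 0"
  proof -
    have N1: "UNIV - G \<in> sets \<eta>" using D by (simp add: eta_sets)
    have "{x \<in> space \<eta>. \<not> x \<in> G} = UNIV - G" by auto
    then show ?thesis using AE_iff_measurable[OF N1, of "\<lambda>w. w \<in> G"] AE_G by simp
  qed
  finally have z: "emeasure \<nu> ((UNIV - G) \<times> UNIV) = 0" .
  have "{x \<in> space \<nu>. \<not> fst x \<in> G} = (UNIV - G) \<times> UNIV" using MM_D(2)[OF nuMM] by auto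
  then show ?thesis using AE_iff_measurable[OF N, of "\<lambda>x. fst x \<in> G"] z by simp
qed
end

context setting begin
lemma As_nu: "As n s \<in> sets \<nu>" using As_sets MM_D(1)[OF nuMM] by simp
lemma As_inv: "TT -` As n s \<inter> space \<nu> = As n s"
proof -
  have "TT x \<in> As n s \<longleftrightarrow> x \<in> As n s" for x
  proof (cases "fst x \<in> G")
    case False
    then show ?thesis using G_shift[of "fst x"] by (simp add: As_def)
  next
    case True
    obtain w a where x: "x = (w, a)" by (cases x)
    have wG: "w \<in> G" using True x by simp
    have e1: "f n (shiftZ w) = rho n * f n w" using G_P[OF wG] unfolding P_def by blast
    have e2: "rho n ^ (s + rr n (odo a)) = rho n * rho n ^ (s + rr n a)"
    proof -
      have "(s + rr n (odo a)) mod 2^n = (Suc (s + rr n a)) mod 2^n"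
        unfolding rr_odo by (simp add: mod_add_right_eq)
      then have "rho n ^ (s + rr n (odo a)) = rho n ^ (Suc (s + rr n a))"
        using rho_pow_eq by blast
      then show ?thesis by simp
    qed
    have "TT x \<in> As n s \<longleftrightarrow> f n (shiftZ w) = rho n ^ (s + rr n (odo a))"
      using wG G_shift[of w] x by (simp add: As_def)
    also have "\<dots> \<longleftrightarrow> rho n * f n w = rho n * rho n ^ (s + rr n a)" unfolding e1 e2 ..
    also have "\<dots> \<longleftrightarrow> f n w = rho n ^ (s + rr n a)" by simp
    also have "\<dots> \<longleftrightarrow> x \<in> As n s" using wG x by (simp add: As_def)
    finally show ?thesis .
  qed
  then show ?thesis using MM_D(2)[OF nuMM] by auto
qed
lemma As_01: "emeasure \<nu> (As n s) = 0 \<or> emeasure \<nu> (As n s) = 1"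
proof -
  have h: "\<forall>A\<in>sets \<nu>. TT -` A \<inter> space \<nu> = A \<longrightarrow> emeasure \<nu> A = 0 \<or> emeasure \<nu> A = 1"
    using nu_erg unfolding ergodic_meas_def by (rule conjunct2)
  show ?thesis by (rule h[rule_format, OF As_nu As_inv])
qed
lemma mod_cover: assumes "r < (m::nat)" shows "((j + (m - r)) mod m + r) mod m = j mod m"
proof -
  have "((j + (m - r)) mod m + r) mod m = (j + (m - r) + r) mod m" by (rule mod_add_left_eq)
  also have "j + (m - r) + r = j + m" using assms by simp
  also have "(j + m) mod m = j mod m" by simp
  finally show ?thesis .
qed
lemma As_cover: assumes "w \<in> G" shows "\<exists>s<2^n. (w, a) \<in> As n s"
proof -
  have "P w" using G_P[OF assms] .
  then obtain j where j: "f n w = rho n ^ j"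
    using chain_vals[of "\<lambda>n. f n w"] unfolding P_def by blast
  define s where "s = (j + (2^n - rr n a)) mod 2^n"
  have "(s + rr n a) mod 2^n = j mod 2^n" unfolding s_def by (rule mod_cover[OF rr_less])
  then have "rho n ^ (s + rr n a) = rho n ^ j" using rho_pow_eq by blast
  then have "(w, a) \<in> As n s" using j assms by (simp add: As_def)
  moreover have "s < 2^n" unfolding s_def by simp
  ultimately show ?thesis by blast
qed
lemma As_disj: assumes "s < 2^n" "s' < 2^n" "x \<in> As n s" "x \<in> As n s'" shows "s = s'"
proof -
  have "rho n ^ (s + rr n (snd x)) = rho n ^ (s' + rr n (snd x))" using assms(3,4) by (simp add: As_def)
  then have "rho n ^ s * rho n ^ rr n (snd x) = rho n ^ s' * rho n ^ rr n (snd x)" by (simp add: power_add)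
  then have "rho n ^ s = rho n ^ s'" by simp
  then have "s mod 2^n = s' mod 2^n" using rho_pow_eq by blast
  then show ?thesis using assms(1,2) by simp
qed

lemma Gset: "{x. fst x \<in> G} \<in> sets \<nu>"
proof -
  have "{x. fst x \<in> G} = G \<times> (UNIV :: (nat \<Rightarrow> bool) set)" by auto
  then show ?thesis using rect_sets[OF nuMM G_sets UNIV_XN] by simp
qed
lemma G_full: "emeasure \<nu> {x. fst x \<in> G} = 1"
proof -
  interpret prob_space \<nu> using MM_D(3)[OF nuMM] .
  have "AE x in \<nu>. (x \<in> {x. fst x \<in> G}) = (x \<in> space \<nu>)"
    using AE_nu_G MM_D(2)[OF nuMM] by simp
  then have "emeasure \<nu> {x. fst x \<in> G} = emeasure \<nu> (space \<nu>)"
    by (rule emeasure_eq_AE[OF _ Gset sets.top])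
  then show ?thesis by (simp add: emeasure_space_1)
qed
lemma As_sum: "(\<Sum>s\<in>{..<2^n}. emeasure \<nu> (As n s)) = 1"
proof -
  have "(\<Sum>s\<in>{..<2^n}. emeasure \<nu> (As n s)) = emeasure \<nu> (\<Union>s\<in>{..<2^n}. As n s)"
  proof (rule sum_emeasure)
    show "As n ` {..<2^n} \<subseteq> sets \<nu>" using As_nu by blast
    show "disjoint_family_on (As n) {..<2^n}"
      unfolding disjoint_family_on_def using As_disj by blast
  qed simp
  also have "(\<Union>s\<in>{..<2^n}. As n s) = {x. fst x \<in> G}"
  proof
    show "(\<Union>s\<in>{..<2^n}. As n s) \<subseteq> {x. fst x \<in> G}" by (auto simp: As_def)
    show "{x. fst x \<in> G} \<subseteq> (\<Union>s\<in>{..<2^n}. As n s)"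
    proof
      fix x :: "(int \<Rightarrow> bool) \<times> (nat \<Rightarrow> bool)" assume "x \<in> {x. fst x \<in> G}"
      then obtain s where "s < 2^n" "(fst x, snd x) \<in> As n s" using As_cover[of "fst x" n "snd x"] by auto
      then show "x \<in> (\<Union>s\<in>{..<2^n}. As n s)" by auto
    qed
  qed
  finally show ?thesis using G_full by simp
qed
lemma As_exists: "\<exists>s<2^n. emeasure \<nu> (As n s) = 1"
proof (rule ccontr)
  assume "\<not> ?thesis"
  then have "\<forall>s\<in>{..<2^n}. emeasure \<nu> (As n s) = 0" using As_01 by auto
  then have "(\<Sum>s\<in>{..<2^n}. emeasure \<nu> (As n s)) = 0" by simp
  then show False using As_sum by simp
qed
lemma As_unique: assumes "s < 2^n" "s' < 2^n" "emeasure \<nu> (As n s) = 1" "emeasure \<nu> (As n s') = 1"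
  shows "s = s'"
proof (rule ccontr)
  assume ne: "s \<noteq> s'"
  interpret prob_space \<nu> using MM_D(3)[OF nuMM] .
  have "As n s \<inter> As n s' = {}" using As_disj[OF assms(1,2)] ne by blast
  then have "emeasure \<nu> (As n s) + emeasure \<nu> (As n s') = emeasure \<nu> (As n s \<union> As n s')"
    by (rule plus_emeasure[OF As_nu As_nu])
  also have "\<dots> \<le> 1" by (rule emeasure_le_1)
  finally show False using assms(3,4) by simp
qed
lemma As_sub: "As (Suc n) s \<subseteq> As n (s mod 2^n)"
proof
  fix x assume x: "x \<in> As (Suc n) s"
  obtain w a where xw: "x = (w, a)" by (cases x)
  have wG: "w \<in> G" and fs: "f (Suc n) w = rho (Suc n) ^ (s + rr (Suc n) a)" using x xw by (auto simp: As_def)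
  have "f n w = (f (Suc n) w)^2" using G_P[OF wG] unfolding P_def by blast
  also have "\<dots> = rho (Suc n) ^ (2 * (s + rr (Suc n) a))" unfolding fs by (simp add: power_mult[symmetric] mult.commute)
  also have "\<dots> = rho n ^ (s + rr (Suc n) a)" by (rule rho_Suc_sq)
  also have "\<dots> = rho n ^ (s mod 2^n + rr n a)"
  proof -
    have r: "rr n a = rr (Suc n) a mod 2^n" by (rule rr_mod) simp
    have "(s + rr (Suc n) a) mod 2^n = (s mod 2^n + rr n a) mod 2^n"
      unfolding r by (simp add: mod_add_eq)
    then show ?thesis using rho_pow_eq by blast
  qed
  finally show "x \<in> As n (s mod 2^n)" using wG xw by (simp add: As_def)
qed
definition S where "S n = (SOME s. s < 2^n \<and> emeasure \<nu> (As n s) = 1)"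
lemma S_prop: "S n < 2^n" "emeasure \<nu> (As n (S n)) = 1"
proof -
  have "S n < 2^n \<and> emeasure \<nu> (As n (S n)) = 1"
    unfolding S_def by (rule someI_ex) (use As_exists in blast)
  then show "S n < 2^n" "emeasure \<nu> (As n (S n)) = 1" by auto
qed
lemma S_cons: "S n = S (Suc n) mod 2^n"
proof -
  interpret prob_space \<nu> using MM_D(3)[OF nuMM] .
  have "emeasure \<nu> (As (Suc n) (S (Suc n))) \<le> emeasure \<nu> (As n (S (Suc n) mod 2^n))"
    by (rule emeasure_mono[OF As_sub As_nu])
  moreover have "emeasure \<nu> (As n (S (Suc n) mod 2^n)) \<le> 1" by (rule emeasure_le_1)
  ultimately have "emeasure \<nu> (As n (S (Suc n) mod 2^n)) = 1" using S_prop(2)[of "Suc n"] by simp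
  then show ?thesis using As_unique[OF S_prop(1) _ S_prop(2)] by simp
qed
definition alpha where "alpha k = bit (S (Suc k)) k"
lemma rr_alpha: "rr n alpha = S n"
proof (induction n)
  case 0 then show ?case using S_prop(1)[of 0] by simp
next
  case (Suc n)
  have "rr (Suc n) alpha = S n + 2^n * (if bit (S (Suc n)) n then 1 else 0)"
  proof -
    have "alpha n = bit (S (Suc n)) n" by (simp add: alpha_def)
    then show ?thesis using Suc by (simp add: rr_Suc)
  qed
  also have "\<dots> = S (Suc n) mod 2^Suc n" unfolding mod_Suc_bit S_cons[of n] ..
  also have "\<dots> = S (Suc n)" using S_prop(1)[of "Suc n"] by simp
  finally show ?case .
qed

lemma B_sets: "Bset \<eta> f j n \<in> sets XZ"
proof -
  have "{w \<in> space XZ. f n w = rho n ^ j} \<in> sets XZ" by measurable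
  then show ?thesis by (simp add: Bset_def)
qed
lemma AE_As: "AE x in \<nu>. x \<in> As n (S n)"
proof -
  interpret prob_space \<nu> using MM_D(3)[OF nuMM] .
  have "measure \<nu> (As n (S n)) = 1" using S_prop(2)[of n] by (simp add: measure_def)
  then show ?thesis by (rule AE_prob_1)
qed
lemma key: assumes E: "E \<in> sets XZ"
  shows "emeasure \<nu> (E \<times> CC n 0) = emeasure \<eta> (E \<inter> Bset \<eta> f (S n) n)"
proof -
  let ?B = "Bset \<eta> f (S n) n"
  have EB: "E \<inter> ?B \<in> sets XZ" using E B_sets by (rule sets.Int)
  have "AE x in \<nu>. (x \<in> E \<times> CC n 0) = (x \<in> (E \<inter> ?B) \<times> UNIV)"
    using AE_As[of n]
  proof (rule eventually_mono)
    fix x :: "(int \<Rightarrow> bool) \<times> (nat \<Rightarrow> bool)"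
    assume x: "x \<in> As n (S n)"
    obtain w a where xw: "x = (w, a)" by (cases x)
    have fw: "f n w = rho n ^ (S n + rr n a)" using x xw by (simp add: As_def)
    have "rr n a = 0 \<longleftrightarrow> f n w = rho n ^ S n"
    proof
      assume "rr n a = 0" then show "f n w = rho n ^ S n" using fw by simp
    next
      assume "f n w = rho n ^ S n"
      then have "rho n ^ S n * rho n ^ rr n a = rho n ^ S n * 1" using fw by (simp add: power_add)
      then have "rho n ^ rr n a = 1" by simp
      then show "rr n a = 0" using rho_pow_one rr_less by blast
    qed
    then show "(x \<in> E \<times> CC n 0) = (x \<in> (E \<inter> ?B) \<times> UNIV)"
      using xw by (auto simp: Bset_def)
  qed
  then have "emeasure \<nu> (E \<times> CC n 0) = emeasure \<nu> ((E \<inter> ?B) \<times> UNIV)"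
    by (rule emeasure_eq_AE[OF _ rect_sets[OF nuMM E cyl_sets] rect_sets[OF nuMM EB UNIV_XN]])
  also have "\<dots> = emeasure \<eta> (E \<inter> ?B)" by (rule marg[OF EB])
  finally show ?thesis .
qed
lemma theta_eq: "theta n \<nu> = theta_alpha \<eta> f alpha n"
proof (rule measure_eqI)
  show "sets (theta n \<nu>) = sets (theta_alpha \<eta> f alpha n)"
    by (simp add: theta_def theta_alpha_def eta_sets)
  fix E assume "E \<in> sets (theta n \<nu>)"
  then have E: "E \<in> sets XZ" by (simp add: theta_def)
  let ?B = "Bset \<eta> f (S n) n"
  have Bm: "?B \<in> sets \<eta>" using B_sets eta_sets by simp
  have Em: "E \<in> sets \<eta>" using E eta_sets by simp
  have "emeasure (theta n \<nu>) E = emeasure \<eta> (E \<inter> ?B) * ennreal (2^n)"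
    using theta_emeasure[OF nuMM E] key[OF E] by simp
  moreover have "emeasure (theta_alpha \<eta> f alpha n) E = 2^n * emeasure \<eta> (?B \<inter> E)"
  proof -
    have g: "(\<lambda>w. 2 ^ n * indicator ?B w :: ennreal) \<in> borel_measurable \<eta>"
      using Bm by measurable
    have "emeasure (theta_alpha \<eta> f alpha n) E = (\<integral>\<^sup>+ w. (2 ^ n * indicator ?B w) * indicator E w \<partial>\<eta>)"
      unfolding theta_alpha_def rr_alpha by (rule emeasure_density[OF g Em])
    also have "\<dots> = (\<integral>\<^sup>+ w. 2 ^ n * indicator (?B \<inter> E) w \<partial>\<eta>)"
      by (rule nn_integral_cong) (simp split: split_indicator)
    also have "\<dots> = 2^n * emeasure \<eta> (?B \<inter> E)"
      by (rule nn_integral_cmult_indicator) (use Bm Em in blast)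
    finally show ?thesis .
  qed
  moreover have "ennreal (2^n) = 2^n" by (metis ennreal_numeral ennreal_power zero_le_numeral)
  ultimately show "emeasure (theta n \<nu>) E = emeasure (theta_alpha \<eta> f alpha n) E"
    by (simp add: Int_commute mult.commute)
qed
lemma final: "\<nu> = nu_alpha \<eta> f alpha"
  unfolding nu_alpha_def
proof (rule the_equality[symmetric])
  show "\<nu> \<in> MM \<and> (\<forall>n. theta n \<nu> = theta_alpha \<eta> f alpha n)" using nuMM theta_eq by blast
  fix \<nu>' assume a: "\<nu>' \<in> MM \<and> (\<forall>n. theta n \<nu>' = theta_alpha \<eta> f alpha n)"
  show "\<nu>' = \<nu>" by (rule MM_unique) (use a theta_eq nuMM in auto)
qed
end

theorem lemma7:
  fixes \<eta> :: "(int \<Rightarrow> bool) measure"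
    and f :: "nat \<Rightarrow> (int \<Rightarrow> bool) \<Rightarrow> complex"
    and \<nu> :: "((int \<Rightarrow> bool) \<times> (nat \<Rightarrow> bool)) measure"
  assumes "prob_space \<eta>" and "sets \<eta> = sets XZ"
    and "ergodic_meas \<eta> shiftZ"
    and "has_odometer_factor \<eta>"
    and "eigen_family \<eta> f"
    and "\<nu> \<in> MM" and "ergodic_meas \<nu> (map_prod shiftZ odo)"
    and "theta 0 \<nu> = \<eta>"
  shows "\<exists>\<alpha>. \<nu> = nu_alpha \<eta> f \<alpha>"
proof -
  interpret setting \<eta> f \<nu>
    by (rule setting.intro[OF assms(1,2,3,5,6,7,8)])
  show ?thesis by (rule exI[of _ alpha], rule final)
qed

end
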